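(* Let $G=C_n$ be a cycle, for some $n\ge3$, and let $L$ be a list-assignment with $|L(v)|=3$ for every vertex $v$. If $\alpha$ and $\beta$ are $L$-colourings, neither of which is frozen, and the lists $L(v)$ are not all identical, then $\alpha\sim\beta$.
   Context: An $L$-colouring is a proper colouring $\varphi$ with $\varphi(v)\in L(v)$ for all $v$. A vertex $v$ is frozen under $\varphi$ if every colour of $L(v)\setminus\{\varphi(v)\}$ appears on a neighbour of $v$; a colouring is frozen if all vertices are frozen. $\alpha\sim\beta$ means $\alpha$ can be transformed into $\beta$ by a sequence of single-vertex recolouring steps, each changing one vertex's colour to another colour of its list so that the colouring remains a proper $L$-colouring. *)

theory Defs
  imports Main
begin

definition cycle_adj :: "nat \<Rightarrow> nat \<Rightarrow> nat \<Rightarrow> bool" where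
  "cycle_adj n u v \<longleftrightarrow> u < n \<and> v < n \<and> (v = Suc u mod n \<or> u = Suc v mod n)"

definition L_colouring :: "'v set \<Rightarrow> ('v \<Rightarrow> 'v \<Rightarrow> bool) \<Rightarrow> ('v \<Rightarrow> 'c set) \<Rightarrow> ('v \<Rightarrow> 'c) \<Rightarrow> bool" where
  "L_colouring V E L \<phi> \<longleftrightarrow>
     (\<forall>v\<in>V. \<phi> v \<in> L v) \<and> (\<forall>u\<in>V. \<forall>v\<in>V. E u v \<longrightarrow> \<phi> u \<noteq> \<phi> v)"

definition frozen_vertex :: "'v set \<Rightarrow> ('v \<Rightarrow> 'v \<Rightarrow> bool) \<Rightarrow> ('v \<Rightarrow> 'c set) \<Rightarrow> ('v \<Rightarrow> 'c) \<Rightarrow> 'v \<Rightarrow> bool" where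
  "frozen_vertex V E L \<phi> v \<longleftrightarrow>
     (\<forall>c \<in> L v - {\<phi> v}. \<exists>u\<in>V. E v u \<and> \<phi> u = c)"

definition frozen :: "'v set \<Rightarrow> ('v \<Rightarrow> 'v \<Rightarrow> bool) \<Rightarrow> ('v \<Rightarrow> 'c set) \<Rightarrow> ('v \<Rightarrow> 'c) \<Rightarrow> bool" where
  "frozen V E L \<phi> \<longleftrightarrow> (\<forall>v\<in>V. frozen_vertex V E L \<phi> v)"

definition recolour_step :: "'v set \<Rightarrow> ('v \<Rightarrow> 'v \<Rightarrow> bool) \<Rightarrow> ('v \<Rightarrow> 'c set) \<Rightarrow> ('v \<Rightarrow> 'c) \<Rightarrow> ('v \<Rightarrow> 'c) \<Rightarrow> bool" where
  "recolour_step V E L \<alpha> \<beta> \<longleftrightarrow>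
     L_colouring V E L \<alpha> \<and> L_colouring V E L \<beta> \<and>
     (\<exists>v\<in>V. \<forall>u\<in>V. u \<noteq> v \<longrightarrow> \<alpha> u = \<beta> u)"

definition reconf :: "'v set \<Rightarrow> ('v \<Rightarrow> 'v \<Rightarrow> bool) \<Rightarrow> ('v \<Rightarrow> 'c set) \<Rightarrow> ('v \<Rightarrow> 'c) \<Rightarrow> ('v \<Rightarrow> 'c) \<Rightarrow> bool" where
  "reconf V E L \<alpha> \<beta> \<longleftrightarrow> (recolour_step V E L)\<^sup>*\<^sup>* \<alpha> \<beta>"

end

theory Submission
  imports Defs
begin

lemma cadj_sym: "cycle_adj n u v = cycle_adj n v u"
  unfolding cycle_adj_def by auto

lemma Suc_mod_cases: "u < n \<Longrightarrow> Suc u mod n = (if Suc u < n then Suc u else 0)"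
proof (cases "Suc u < n")
  case False
  assume "u < n"
  then have "Suc u = n" using False by simp
  then show ?thesis by simp
qed simp

lemma cadj_iff:
  assumes "n \<ge> 3" "u < n" "v < n"
  shows "cycle_adj n u v \<longleftrightarrow> (v = Suc u \<or> u = Suc v \<or> (u = n-1 \<and> v = 0) \<or> (u = 0 \<and> v = n-1))"
  using assms unfolding cycle_adj_def
  by (auto simp: Suc_mod_cases split: if_splits)

lemma cadj_irrefl: "n \<ge> 3 \<Longrightarrow> \<not> cycle_adj n u u"
  unfolding cycle_adj_def by (auto simp: Suc_mod_cases split: if_splits)

lemma col_cong:
  assumes "L_colouring V E L \<phi>" "\<forall>x\<in>V. L' x = L x" "\<forall>x\<in>V. \<phi>' x = \<phi> x"
  shows "L_colouring V E L' \<phi>'"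
  using assms unfolding L_colouring_def by auto

lemma step_congL:
  assumes "\<forall>x\<in>V. L' x = L x"
  shows "recolour_step V E L' = recolour_step V E L"
proof -
  have "\<And>\<phi>. L_colouring V E L' \<phi> = L_colouring V E L \<phi>"
    using assms unfolding L_colouring_def by auto
  thus ?thesis unfolding recolour_step_def by simp
qed

lemma step_agree:
  assumes "L_colouring V E L \<phi>" "L_colouring V E L \<psi>" "\<forall>x\<in>V. \<phi> x = \<psi> x" "V \<noteq> {}"
  shows "recolour_step V E L \<phi> \<psi>"
  using assms unfolding recolour_step_def by auto

lemma reconf_col:
  assumes "reconf V E L \<phi> \<psi>" "L_colouring V E L \<phi>"
  shows "L_colouring V E L \<psi>"
  using assms unfolding reconf_def
  by (induction rule: rtranclp_induct) (auto simp: recolour_step_def)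

lemma reconf_sym:
  assumes "reconf V E L \<phi> \<psi>" shows "reconf V E L \<psi> \<phi>"
proof -
  have s: "recolour_step V E L a b \<Longrightarrow> recolour_step V E L b a" for a b
    unfolding recolour_step_def by metis
  show ?thesis using assms unfolding reconf_def
  proof (induction rule: rtranclp_induct)
    case base then show ?case by simp
  next
    case (step y z) then show ?case by (meson converse_rtranclp_into_rtranclp s)
  qed
qed

lemma reconf_trans: "reconf V E L a b \<Longrightarrow> reconf V E L b c \<Longrightarrow> reconf V E L a c"
  unfolding reconf_def by (rule rtranclp_trans)

lemma reconf_refl: "reconf V E L a a"
  unfolding reconf_def by simp

lemma reconf_cong:
  assumes "reconf V E L \<phi> \<psi>" "L_colouring V E L' \<phi>'" "V \<noteq> {}"
   "\<forall>x\<in>V. L' x = L x" "\<forall>x\<in>V. \<phi>' x = \<phi> x" "\<forall>x\<in>V. \<psi>' x = \<psi> x"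
  shows "reconf V E L' \<phi>' \<psi>'"
proof -
  have eq: "recolour_step V E L' = recolour_step V E L" by (rule step_congL[OF assms(4)])
  have c1: "L_colouring V E L \<phi>" using assms(2,4,5) unfolding L_colouring_def by auto
  have c2: "L_colouring V E L \<psi>" using reconf_col[OF assms(1) c1] .
  have c3: "L_colouring V E L \<psi>'" using c2 assms(6) unfolding L_colouring_def by auto
  have c4: "L_colouring V E L \<phi>'" using c1 assms(5) unfolding L_colouring_def by auto
  have "recolour_step V E L \<phi>' \<phi>" using step_agree[OF c4 c1] assms(3,5) by auto
  moreover have "recolour_step V E L \<psi> \<psi>'" using step_agree[OF c2 c3] assms(3,6) by auto
  ultimately have "reconf V E L \<phi>' \<psi>'" using assms(1) unfolding reconf_def
    by (meson converse_rtranclp_into_rtranclp rtranclp.rtrancl_into_rtrancl)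
  thus ?thesis unfolding reconf_def eq .
qed

lemma col_tr:
  assumes "L_colouring V E L \<phi>" "\<forall>x\<in>V. \<sigma> x \<in> V" "\<forall>x\<in>V. \<forall>y\<in>V. E (\<sigma> x) (\<sigma> y) = E x y"
  shows "L_colouring V E (L \<circ> \<sigma>) (\<phi> \<circ> \<sigma>)"
  using assms unfolding L_colouring_def by auto

lemma step_tr:
  assumes "recolour_step V E L \<phi> \<psi>" "\<forall>x\<in>V. \<sigma> x \<in> V" "\<forall>x\<in>V. \<tau> x \<in> V"
    "\<forall>x\<in>V. \<sigma> (\<tau> x) = x" "\<forall>x\<in>V. \<tau> (\<sigma> x) = x"
    "\<forall>x\<in>V. \<forall>y\<in>V. E (\<sigma> x) (\<sigma> y) = E x y"
  shows "recolour_step V E (L \<circ> \<sigma>) (\<phi> \<circ> \<sigma>) (\<psi> \<circ> \<sigma>)"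
proof -
  from assms(1) obtain v where v: "v \<in> V" "\<forall>u\<in>V. u \<noteq> v \<longrightarrow> \<phi> u = \<psi> u"
    and c: "L_colouring V E L \<phi>" "L_colouring V E L \<psi>"
    unfolding recolour_step_def by auto
  have "\<forall>u\<in>V. u \<noteq> \<tau> v \<longrightarrow> (\<phi> \<circ> \<sigma>) u = (\<psi> \<circ> \<sigma>) u"
  proof (intro ballI impI)
    fix u assume u: "u \<in> V" "u \<noteq> \<tau> v"
    have "\<sigma> u \<noteq> v" using u assms(5) by metis
    thus "(\<phi> \<circ> \<sigma>) u = (\<psi> \<circ> \<sigma>) u" using v assms(2) u by auto
  qed
  thus ?thesis unfolding recolour_step_def
    using col_tr[OF c(1) assms(2,6)] col_tr[OF c(2) assms(2,6)] v(1) assms(3) by blast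
qed

lemma reconf_tr:
  assumes "reconf V E L \<phi> \<psi>" "\<forall>x\<in>V. \<sigma> x \<in> V" "\<forall>x\<in>V. \<tau> x \<in> V"
    "\<forall>x\<in>V. \<sigma> (\<tau> x) = x" "\<forall>x\<in>V. \<tau> (\<sigma> x) = x"
    "\<forall>x\<in>V. \<forall>y\<in>V. E (\<sigma> x) (\<sigma> y) = E x y"
  shows "reconf V E (L \<circ> \<sigma>) (\<phi> \<circ> \<sigma>) (\<psi> \<circ> \<sigma>)"
  using assms(1) unfolding reconf_def
proof (induction rule: rtranclp_induct)
  case base then show ?case by simp
next
  case (step y z)
  then show ?case using step_tr[OF step.hyps(2) assms(2-6)]
    by (meson rtranclp.rtrancl_into_rtrancl)
qed

lemma frozen_tr:
  assumes "frozen V E L \<phi>" "\<forall>x\<in>V. \<sigma> x \<in> V" "\<forall>x\<in>V. \<tau> x \<in> V"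
    "\<forall>x\<in>V. \<sigma> (\<tau> x) = x" "\<forall>x\<in>V. \<forall>y\<in>V. E (\<sigma> x) (\<sigma> y) = E x y"
  shows "frozen V E (L \<circ> \<sigma>) (\<phi> \<circ> \<sigma>)"
  unfolding frozen_def frozen_vertex_def
proof (intro ballI)
  fix v c assume v: "v \<in> V" and c: "c \<in> (L \<circ> \<sigma>) v - {(\<phi> \<circ> \<sigma>) v}"
  have "\<sigma> v \<in> V" using v assms(2) by auto
  then obtain u where u: "u \<in> V" "E (\<sigma> v) u" "\<phi> u = c"
    using assms(1) c unfolding frozen_def frozen_vertex_def by auto
  have "\<tau> u \<in> V" "E v (\<tau> u)" "(\<phi> \<circ> \<sigma>) (\<tau> u) = c"
    using u assms v by auto (metis)
  then show "\<exists>u\<in>V. E v u \<and> (\<phi> \<circ> \<sigma>) u = c" by blast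
qed

lemma frozen_cong:
  assumes "frozen V E L \<phi>" "\<forall>x\<in>V. L' x = L x" "\<forall>x\<in>V. \<phi>' x = \<phi> x"
  shows "frozen V E L' \<phi>'"
  using assms unfolding frozen_def frozen_vertex_def by fastforce

definition rot :: "nat \<Rightarrow> nat \<Rightarrow> nat \<Rightarrow> nat" where "rot n s x = (x + s) mod n"

lemma rot_in: "0 < n \<Longrightarrow> rot n s x < n"
  unfolding rot_def by simp

lemma rot_inv: "x < n \<Longrightarrow> s \<le> n \<Longrightarrow> rot n (n - s) (rot n s x) = x"
proof -
  assume a: "x < n" "s \<le> n"
  have "rot n (n - s) (rot n s x) = ((x + s) mod n + (n - s)) mod n" unfolding rot_def by simp
  also have "\<dots> = (x + s + (n - s)) mod n" by (rule mod_add_left_eq)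
  also have "x + s + (n - s) = x + n" using a by simp
  finally show ?thesis using a by simp
qed

lemma rot_inv2: "x < n \<Longrightarrow> s \<le> n \<Longrightarrow> rot n s (rot n (n - s) x) = x"
  unfolding rot_def by (simp add: mod_add_left_eq)

lemma rot_inj: "x < n \<Longrightarrow> y < n \<Longrightarrow> s \<le> n \<Longrightarrow> rot n s x = rot n s y \<Longrightarrow> x = y"
  by (metis rot_inv)

lemma rot_Suc: "Suc (rot n s x) mod n = rot n s (Suc x mod n)"
  unfolding rot_def by (simp add: mod_Suc_eq mod_add_left_eq)

lemma rot_adj:
  assumes "x < n" "y < n" "s \<le> n"
  shows "cycle_adj n (rot n s x) (rot n s y) = cycle_adj n x y"
proof -
  have n: "0 < n" using assms by auto
  have a: "rot n s y = Suc (rot n s x) mod n \<longleftrightarrow> y = Suc x mod n"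
    unfolding rot_Suc using rot_inj[OF assms(2) _ assms(3), of "Suc x mod n"] n by auto
  have b: "rot n s x = Suc (rot n s y) mod n \<longleftrightarrow> x = Suc y mod n"
    unfolding rot_Suc using rot_inj[OF assms(1) _ assms(3), of "Suc y mod n"] n by auto
  show ?thesis unfolding cycle_adj_def using a b assms rot_in[OF n] by auto
qed


lemma pick3:
  assumes "finite A" "card A = 3"
  shows "\<exists>y\<in>A. y \<noteq> p \<and> y \<noteq> q"
proof (rule ccontr)
  assume "\<not> ?thesis"
  then have "A \<subseteq> {p, q}" by auto
  then have "card A \<le> card {p,q}" by (rule card_mono[rotated]) simp
  also have "\<dots> \<le> 2" by (cases "p = q") auto
  finally show False using assms by simp
qed

context
  fixes n :: nat and L :: "nat \<Rightarrow> 'c set"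
  assumes n3: "n \<ge> 3" and card3: "\<forall>v<n. finite (L v) \<and> card (L v) = 3"
begin

abbreviation "col \<equiv> L_colouring {0..<n} (cycle_adj n) L"
abbreviation "rc \<equiv> reconf {0..<n} (cycle_adj n) L"
abbreviation "frz \<gamma> j \<equiv> frozen_vertex {0..<n} (cycle_adj n) L \<gamma> j"

lemma upd:
  assumes "col \<gamma>" "x < n" "y \<in> L x" "\<forall>u<n. cycle_adj n x u \<longrightarrow> \<gamma> u \<noteq> y"
  shows "rc \<gamma> (\<gamma>(x := y))" "col (\<gamma>(x := y))"
proof -
  show c: "col (\<gamma>(x := y))"
    unfolding L_colouring_def
  proof (intro conjI ballI impI)
    fix v assume "v \<in> {0..<n}" then show "(\<gamma>(x := y)) v \<in> L v"
      using assms(1,3) unfolding L_colouring_def by auto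
  next
    fix u v assume uv: "u \<in> {0..<n}" "v \<in> {0..<n}" "cycle_adj n u v"
    have "u \<noteq> v" using uv cadj_irrefl[OF n3] by auto
    show "(\<gamma>(x := y)) u \<noteq> (\<gamma>(x := y)) v"
    proof (cases "u = x \<or> v = x")
      case True
      then show ?thesis using assms(4) uv \<open>u \<noteq> v\<close> cadj_sym[of n u v] by auto
    next
      case False
      then show ?thesis using assms(1) uv unfolding L_colouring_def by auto
    qed
  qed
  have "recolour_step {0..<n} (cycle_adj n) L \<gamma> (\<gamma>(x := y))"
    unfolding recolour_step_def using assms(1,2) c by auto
  then show "rc \<gamma> (\<gamma>(x := y))" unfolding reconf_def by auto
qed

lemma unfrozen_move:
  assumes "col \<gamma>" "j < n" "\<not> frz \<gamma> j"
  shows "\<exists>\<gamma>'. rc \<gamma> \<gamma>' \<and> col \<gamma>' \<and> \<gamma>' j \<noteq> \<gamma> j \<and> (\<forall>i. i \<noteq> j \<longrightarrow> \<gamma>' i = \<gamma> i)"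
proof -
  from assms(3) obtain y where y0: "y \<in> L j" "y \<noteq> \<gamma> j"
     "\<forall>u\<in>{0..<n}. \<not> (cycle_adj n j u \<and> \<gamma> u = y)"
    unfolding frozen_vertex_def by blast
  then have y: "y \<in> L j" "y \<noteq> \<gamma> j" "\<forall>u<n. cycle_adj n j u \<longrightarrow> \<gamma> u \<noteq> y" by auto
  show ?thesis using upd[OF assms(1,2) y(1,3)] y(2) by (intro exI[of _ "\<gamma>(j := y)"]) auto
qed

lemma frozen_nb:
  assumes "col \<gamma>" "j < n" "frz \<gamma> j" "a < n" "b < n" "cycle_adj n j a" "cycle_adj n j b" "a \<noteq> b"
    "\<forall>u<n. cycle_adj n j u \<longrightarrow> u = a \<or> u = b"
  shows "\<gamma> a \<in> L j \<and> \<gamma> b \<in> L j \<and> \<gamma> a \<noteq> \<gamma> b"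
proof -
  have sub: "L j - {\<gamma> j} \<subseteq> {\<gamma> a, \<gamma> b}"
  proof
    fix c assume "c \<in> L j - {\<gamma> j}"
    then obtain u where "u \<in> {0..<n}" "cycle_adj n j u" "\<gamma> u = c"
      using assms(3) unfolding frozen_vertex_def by blast
    then show "c \<in> {\<gamma> a, \<gamma> b}" using assms(9) by auto
  qed
  have gj: "\<gamma> j \<in> L j" using assms(1,2) unfolding L_colouring_def by auto
  have fin: "finite (L j)" "card (L j) = 3" using card3 assms(2) by auto
  have c2: "card (L j - {\<gamma> j}) = 2" using card_Diff_singleton[OF gj] fin by simp
  have le: "card {\<gamma> a, \<gamma> b} \<le> 2" by (cases "\<gamma> a = \<gamma> b") auto
  have "card (L j - {\<gamma> j}) \<le> card {\<gamma> a, \<gamma> b}" by (rule card_mono[OF _ sub]) simp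
  then have ceq: "card (L j - {\<gamma> j}) = card {\<gamma> a, \<gamma> b}" using le c2 by simp
  have eq: "L j - {\<gamma> j} = {\<gamma> a, \<gamma> b}" by (rule card_subset_eq[OF _ sub ceq]) simp
  have "\<gamma> a \<noteq> \<gamma> b" using ceq c2 by auto
  then show ?thesis using eq by auto
qed

lemma chain_step:
  assumes "col \<gamma>" "col \<gamma>'" "j < n" "frz \<gamma> j" "a < n" "b < n" "cycle_adj n j a" "cycle_adj n j b" "a \<noteq> b"
    "\<forall>u<n. cycle_adj n j u \<longrightarrow> u = a \<or> u = b"
    "\<gamma>' a = \<gamma> a" "\<gamma>' b \<noteq> \<gamma> b"
  shows "rc \<gamma>' (\<gamma>'(j := \<gamma> b))" "col (\<gamma>'(j := \<gamma> b))" "\<gamma> b \<noteq> \<gamma> j"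
proof -
  have f: "\<gamma> a \<in> L j" "\<gamma> b \<in> L j" "\<gamma> a \<noteq> \<gamma> b"
    using frozen_nb[OF assms(1,3,4,5,6,7,8,9,10)] by auto
  have nb: "\<forall>u<n. cycle_adj n j u \<longrightarrow> \<gamma>' u \<noteq> \<gamma> b" using assms(10,11,12) f(3) by auto
  show "rc \<gamma>' (\<gamma>'(j := \<gamma> b))" "col (\<gamma>'(j := \<gamma> b))" using upd[OF assms(2,3) f(2) nb] by auto
  have "j \<in> {0..<n}" "b \<in> {0..<n}" using assms(3,6) by auto
  then show "\<gamma> b \<noteq> \<gamma> j" using assms(1,8) unfolding L_colouring_def by metis
qed

lemma move0:
  assumes col: "col \<gamma>" and nf: "\<not> frozen {0..<n} (cycle_adj n) L \<gamma>"
  shows "\<exists>\<gamma>'. rc \<gamma> \<gamma>' \<and> \<gamma>' 0 \<noteq> \<gamma> 0"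
proof (cases "frz \<gamma> 0")
  case False
  then show ?thesis using unfrozen_move[OF col _ False] n3 by auto
next
  case f0: True
  have adj01: "cycle_adj n 0 1" "cycle_adj n 0 (n-1)" using cadj_iff[OF n3] n3 by auto
  have nb0: "\<forall>u<n. cycle_adj n 0 u \<longrightarrow> u = 1 \<or> u = n - 1" using cadj_iff[OF n3] n3 by auto
  show ?thesis
  proof (cases "frz \<gamma> (n-1)")
    case False
    obtain \<gamma>1 where g1: "rc \<gamma> \<gamma>1" "col \<gamma>1" "\<gamma>1 (n-1) \<noteq> \<gamma> (n-1)" "\<forall>i. i \<noteq> n-1 \<longrightarrow> \<gamma>1 i = \<gamma> i"
      using unfrozen_move[OF col _ False] n3 by auto
    have e1: "\<gamma>1 1 = \<gamma> 1" using g1(4) n3 by auto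
    have ne: "(1::nat) \<noteq> n - 1" using n3 by auto
    note cs = chain_step[OF col g1(2) _ f0 _ _ adj01 ne nb0 e1 g1(3)]
    have r: "rc \<gamma>1 (\<gamma>1(0 := \<gamma> (n-1)))" "\<gamma> (n-1) \<noteq> \<gamma> 0" using cs n3 by auto
    have "rc \<gamma> (\<gamma>1(0 := \<gamma> (n-1)))" using reconf_trans[OF g1(1) r(1)] .
    then show ?thesis using r(2) by (intro exI[of _ "\<gamma>1(0 := \<gamma> (n-1))"]) auto
  next
    case fn: True
    have "\<exists>z. z < n \<and> \<not> frz \<gamma> z" using nf unfolding frozen_def by auto
    then obtain z where z: "z < n" "\<not> frz \<gamma> z" "\<forall>m<z. \<not>(m < n \<and> \<not> frz \<gamma> m)"
      using exists_least_iff[of "\<lambda>z. z < n \<and> \<not> frz \<gamma> z"] by blast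
    have z0: "z \<noteq> 0"
    proof
      assume "z = 0" with z(2) f0 show False by simp
    qed
    have zn: "z \<le> n - 2" using z fn by (cases "z = n-1") auto
    define R where "R j \<longleftrightarrow> (\<exists>\<gamma>'. rc \<gamma> \<gamma>' \<and> col \<gamma>' \<and> \<gamma>' j \<noteq> \<gamma> j \<and> (\<forall>i<n. (i < j \<or> z < i) \<longrightarrow> \<gamma>' i = \<gamma> i))" for j
    have "R 0"
    proof (rule inc_induct[of 0 z R])
      show "0 \<le> z" by simp
      show "R z" unfolding R_def using unfrozen_move[OF col z(1,2)] by auto
    next
      fix j assume j: "0 \<le> j" "j < z" "R (Suc j)"
      then obtain \<gamma>' where g: "rc \<gamma> \<gamma>'" "col \<gamma>'" "\<gamma>' (Suc j) \<noteq> \<gamma> (Suc j)"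
          "\<forall>i<n. (i < Suc j \<or> z < i) \<longrightarrow> \<gamma>' i = \<gamma> i"
        unfolding R_def by blast
      define a where "a = (if j = 0 then n - 1 else j - 1)"
      have fj: "frz \<gamma> j" using z(3) j zn by auto
      have jn: "j < n" "a < n" "Suc j < n" using j zn n3 a_def by auto
      have adj: "cycle_adj n j a" "cycle_adj n j (Suc j)" using cadj_iff[OF n3] jn a_def j zn by auto
      have ab: "a \<noteq> Suc j" using a_def n3 j zn by auto
      have nb: "\<forall>u<n. cycle_adj n j u \<longrightarrow> u = a \<or> u = Suc j"
        using cadj_iff[OF n3] a_def j zn n3 by auto
      have ga: "\<gamma>' a = \<gamma> a" using g(4) a_def jn j zn by auto
      note cs = chain_step[OF col g(2) jn(1) fj jn(2) jn(3) adj ab nb ga g(3)]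
      have r: "rc \<gamma> (\<gamma>'(j := \<gamma> (Suc j)))" using reconf_trans[OF g(1) cs(1)] .
      show "R j" unfolding R_def
        apply (rule exI[of _ "\<gamma>'(j := \<gamma> (Suc j))"])
        using cs r g(4) j(2) by auto
    qed
    then show ?thesis unfolding R_def by auto
  qed
qed

end

lemma rot_hyps:
  assumes "n > 0" "s \<le> n"
  shows "\<forall>x\<in>{0..<n}. rot n s x \<in> {0..<n}" "\<forall>x\<in>{0..<n}. rot n (n-s) x \<in> {0..<n}"
   "\<forall>x\<in>{0..<n}. rot n s (rot n (n-s) x) = x" "\<forall>x\<in>{0..<n}. rot n (n-s) (rot n s x) = x"
   "\<forall>x\<in>{0..<n}. \<forall>y\<in>{0..<n}. cycle_adj n (rot n s x) (rot n s y) = cycle_adj n x y"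
   "\<forall>x\<in>{0..<n}. \<forall>y\<in>{0..<n}. cycle_adj n (rot n (n-s) x) (rot n (n-s) y) = cycle_adj n x y"
  using assms rot_in rot_inv rot_inv2 rot_adj by auto

lemma move_any:
  assumes n3: "n \<ge> 3" and card3: "\<forall>v<n. finite (L v) \<and> card (L v) = 3"
    and col: "L_colouring {0..<n} (cycle_adj n) L \<gamma>" and nf: "\<not> frozen {0..<n} (cycle_adj n) L \<gamma>"
    and t: "t < n"
  shows "\<exists>\<gamma>'. reconf {0..<n} (cycle_adj n) L \<gamma> \<gamma>' \<and> \<gamma>' t \<noteq> \<gamma> t"
proof -
  let ?V = "{0..<n}" and ?E = "cycle_adj n"
  define \<sigma> where "\<sigma> = rot n t"
  define \<tau> where "\<tau> = rot n (n - t)"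
  have n0: "n > 0" using n3 by simp
  have tn: "t \<le> n" using t by simp
  note H = rot_hyps[OF n0 tn, folded \<sigma>_def \<tau>_def]
  have card': "\<forall>v<n. finite ((L \<circ> \<sigma>) v) \<and> card ((L \<circ> \<sigma>) v) = 3" using card3 H(1) by auto
  have col': "L_colouring ?V ?E (L \<circ> \<sigma>) (\<gamma> \<circ> \<sigma>)" using col_tr[OF col H(1) H(5)] .
  have nf': "\<not> frozen ?V ?E (L \<circ> \<sigma>) (\<gamma> \<circ> \<sigma>)"
  proof
    assume "frozen ?V ?E (L \<circ> \<sigma>) (\<gamma> \<circ> \<sigma>)"
    from frozen_tr[OF this H(2) H(1) H(4) H(6)]
    have "frozen ?V ?E (L \<circ> \<sigma> \<circ> \<tau>) (\<gamma> \<circ> \<sigma> \<circ> \<tau>)" .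
    then have "frozen ?V ?E L \<gamma>" by (rule frozen_cong) (use H(3) in auto)
    with nf show False by simp
  qed
  obtain \<gamma>1 where g1: "reconf ?V ?E (L \<circ> \<sigma>) (\<gamma> \<circ> \<sigma>) \<gamma>1" "\<gamma>1 0 \<noteq> (\<gamma> \<circ> \<sigma>) 0"
    using move0[OF n3 card' col' nf'] by blast
  have r: "reconf ?V ?E (L \<circ> \<sigma> \<circ> \<tau>) (\<gamma> \<circ> \<sigma> \<circ> \<tau>) (\<gamma>1 \<circ> \<tau>)"
    using reconf_tr[OF g1(1) H(2) H(1) H(4) H(3) H(6)] .
  have r2: "reconf ?V ?E L \<gamma> (\<gamma>1 \<circ> \<tau>)"
    by (rule reconf_cong[OF r col]) (use H(3) n0 in auto)
  have "\<tau> t = 0" unfolding \<tau>_def rot_def using t by simp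
  moreover have "\<sigma> 0 = t" unfolding \<sigma>_def rot_def using t by simp
  ultimately show ?thesis using r2 g1(2) by (intro exI[of _ "\<gamma>1 \<circ> \<tau>"]) auto
qed


context
  fixes n :: nat and L :: "nat \<Rightarrow> 'c set" and c :: 'c
  assumes n3: "n \<ge> 3" and card3: "\<forall>v<n. finite (L v) \<and> card (L v) = 3"
    and cin: "c \<in> L (n-1)" and cout: "c \<notin> L 0"
begin

lemma pushP:
  "m \<le> n - 2 \<Longrightarrow> \<forall>\<gamma> x. col n L \<gamma> \<and> \<gamma> (n-1) = c \<longrightarrow>
     (\<exists>\<gamma>'. rc n L \<gamma> \<gamma>' \<and> col n L \<gamma>' \<and> \<gamma>' m \<noteq> x \<and> (\<forall>i<n. m < i \<longrightarrow> \<gamma>' i = \<gamma> i))"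
proof (induction m)
  case 0
  show ?case
  proof (intro allI impI)
    fix \<gamma> x assume a: "col n L \<gamma> \<and> \<gamma> (n-1) = c"
    obtain y where y: "y \<in> L 0" "y \<noteq> x" "y \<noteq> \<gamma> 1"
      using pick3[of "L 0" x "\<gamma> 1"] card3 n3 by auto
    have nb: "\<forall>u<n. cycle_adj n 0 u \<longrightarrow> \<gamma> u \<noteq> y"
    proof (intro allI impI)
      fix u assume "u < n" "cycle_adj n 0 u"
      then have "u = 1 \<or> u = n - 1" using cadj_iff[OF n3] n3 by auto
      then show "\<gamma> u \<noteq> y" using y a cout by auto
    qed
    have n0: "0 < n" using n3 by simp
    note U = upd[OF n3 card3 conjunct1[OF a] n0 y(1) nb]
    show "\<exists>\<gamma>'. rc n L \<gamma> \<gamma>' \<and> col n L \<gamma>' \<and> \<gamma>' 0 \<noteq> x \<and> (\<forall>i<n. 0 < i \<longrightarrow> \<gamma>' i = \<gamma> i)"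
      using U y(2) by (intro exI[of _ "\<gamma>(0 := y)"]) auto
  qed
next
  case (Suc m)
  show ?case
  proof (intro allI impI)
    fix \<gamma> x assume a: "col n L \<gamma> \<and> \<gamma> (n-1) = c"
    have m: "Suc m \<le> n - 2" "m \<le> n - 2" using Suc.prems by auto
    obtain y where y: "y \<in> L (Suc m)" "y \<noteq> x" "y \<noteq> \<gamma> (Suc (Suc m))"
      using pick3[of "L (Suc m)" x "\<gamma> (Suc (Suc m))"] card3 m n3 by auto
    obtain \<gamma>1 where g1: "rc n L \<gamma> \<gamma>1" "col n L \<gamma>1" "\<gamma>1 m \<noteq> y" "\<forall>i<n. m < i \<longrightarrow> \<gamma>1 i = \<gamma> i"
      using Suc.IH[OF m(2)] a by blast
    have nb: "\<forall>u<n. cycle_adj n (Suc m) u \<longrightarrow> \<gamma>1 u \<noteq> y"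
    proof (intro allI impI)
      fix u assume u: "u < n" "cycle_adj n (Suc m) u"
      then have "u = m \<or> u = Suc (Suc m)" using cadj_iff[OF n3] m n3 by auto
      then show "\<gamma>1 u \<noteq> y" using y g1(3,4) m n3 by auto
    qed
    have sm: "Suc m < n" using m n3 by simp
    note U = upd[OF n3 card3 g1(2) sm y(1) nb]
    have r: "rc n L \<gamma> (\<gamma>1(Suc m := y))" using reconf_trans[OF g1(1) U(1)] .
    show "\<exists>\<gamma>'. rc n L \<gamma> \<gamma>' \<and> col n L \<gamma>' \<and> \<gamma>' (Suc m) \<noteq> x \<and> (\<forall>i<n. Suc m < i \<longrightarrow> \<gamma>' i = \<gamma> i)"
      using U(2) r y(2) g1(4) by (intro exI[of _ "\<gamma>1(Suc m := y)"]) auto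
  qed
qed

lemma pushQ:
  "k \<le> n - 1 \<Longrightarrow> \<forall>\<gamma> \<delta>. col n L \<gamma> \<and> col n L \<delta> \<and> \<delta> (n-1) = c \<and> (\<forall>i<n. k \<le> i \<longrightarrow> \<gamma> i = \<delta> i)
     \<longrightarrow> rc n L \<gamma> \<delta>"
proof (induction k)
  case 0
  show ?case
  proof (intro allI impI)
    fix \<gamma> \<delta> assume a: "col n L \<gamma> \<and> col n L \<delta> \<and> \<delta> (n-1) = c \<and> (\<forall>i<n. 0 \<le> i \<longrightarrow> \<gamma> i = \<delta> i)"
    have "recolour_step {0..<n} (cycle_adj n) L \<gamma> \<delta>"
      by (rule step_agree) (use a n3 in auto)
    then show "rc n L \<gamma> \<delta>" unfolding reconf_def by auto
  qed
next
  case (Suc k)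
  show ?case
  proof (intro allI impI)
    fix \<gamma> \<delta> assume a: "col n L \<gamma> \<and> col n L \<delta> \<and> \<delta> (n-1) = c \<and> (\<forall>i<n. Suc k \<le> i \<longrightarrow> \<gamma> i = \<delta> i)"
    have k: "Suc k \<le> n-1" "k \<le> n-1" "k < n" using Suc.prems by auto
    have gc: "\<gamma> (n-1) = c" using a k n3 by auto
    have dprop: "\<And>u v. u < n \<Longrightarrow> v < n \<Longrightarrow> cycle_adj n u v \<Longrightarrow> \<delta> u \<noteq> \<delta> v"
      using a unfolding L_colouring_def by auto
    have dL: "\<delta> k \<in> L k" using a k n3 unfolding L_colouring_def by auto
    obtain \<gamma>1 where g1: "rc n L \<gamma> \<gamma>1" "col n L \<gamma>1" "\<forall>i<n. k < i \<longrightarrow> \<gamma>1 i = \<gamma> i"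
       "\<forall>u<n. cycle_adj n k u \<longrightarrow> \<gamma>1 u \<noteq> \<delta> k"
    proof (cases "k = 0")
      case True
      have nb: "\<forall>u<n. cycle_adj n k u \<longrightarrow> \<gamma> u \<noteq> \<delta> k"
      proof (intro allI impI)
        fix u assume u: "u < n" "cycle_adj n k u"
        then have "u = 1 \<or> u = n - 1" using cadj_iff[OF n3] n3 True by auto
        then have "\<gamma> u = \<delta> u" using a n3 True by auto
        then show "\<gamma> u \<noteq> \<delta> k" using dprop[OF k(3) u(1)] u(2) by auto
      qed
      show ?thesis by (rule that[of \<gamma>]) (use nb a reconf_refl in auto)
    next
      case False
      have km: "k - 1 \<le> n - 2" using k by auto
      have gcol: "col n L \<gamma> \<and> \<gamma> (n-1) = c" using a gc by auto
      obtain \<gamma>1 where h: "rc n L \<gamma> \<gamma>1" "col n L \<gamma>1" "\<gamma>1 (k-1) \<noteq> \<delta> k" "\<forall>i<n. k - 1 < i \<longrightarrow> \<gamma>1 i = \<gamma> i"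
        using pushP[OF km] gcol by blast
      have nb: "\<forall>u<n. cycle_adj n k u \<longrightarrow> \<gamma>1 u \<noteq> \<delta> k"
      proof (intro allI impI)
        fix u assume u: "u < n" "cycle_adj n k u"
        then have "u = k - 1 \<or> u = Suc k" using cadj_iff[OF n3] n3 False k by auto
        then show "\<gamma>1 u \<noteq> \<delta> k"
        proof
          assume "u = k - 1" then show ?thesis using h(3) by simp
        next
          assume us: "u = Suc k"
          then have "\<gamma>1 u = \<delta> u" using h(4) a u(1) by auto
          then show ?thesis using dprop[OF k(3) u(1)] u(2) by auto
        qed
      qed
      show ?thesis by (rule that[of \<gamma>1]) (use h nb in auto)
    qed
    note U = upd[OF n3 card3 g1(2) k(3) dL g1(4)]
    have r1: "rc n L \<gamma> (\<gamma>1(k := \<delta> k))" using reconf_trans[OF g1(1) U(1)] .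
    have ag: "\<forall>i<n. k \<le> i \<longrightarrow> (\<gamma>1(k := \<delta> k)) i = \<delta> i" using g1(3) a by auto
    have pre: "col n L (\<gamma>1(k := \<delta> k)) \<and> col n L \<delta> \<and> \<delta> (n-1) = c \<and>
       (\<forall>i<n. k \<le> i \<longrightarrow> (\<gamma>1(k := \<delta> k)) i = \<delta> i)" using ag U(2) a by blast
    have "rc n L (\<gamma>1(k := \<delta> k)) \<delta>"
      using Suc.IH[OF k(2)] pre by blast
    then show "rc n L \<gamma> \<delta>" using reconf_trans[OF r1] by blast
  qed
qed

lemma to_c:
  assumes "col n L \<gamma>" "\<not> frozen {0..<n} (cycle_adj n) L \<gamma>"
  shows "\<exists>\<gamma>'. rc n L \<gamma> \<gamma>' \<and> col n L \<gamma>' \<and> \<gamma>' (n-1) = c"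
proof -
  obtain \<gamma>1 where g1: "rc n L \<gamma> \<gamma>1" "\<gamma>1 (n-2) \<noteq> c"
  proof (cases "\<gamma> (n-2) = c")
    case True
    have "n - 2 < n" using n3 by simp
    then show ?thesis using move_any[OF n3 card3 assms] True that by metis
  next
    case False then show ?thesis using that reconf_refl by metis
  qed
  have c1: "col n L \<gamma>1" using reconf_col[OF g1(1) assms(1)] .
  have nb: "\<forall>u<n. cycle_adj n (n-1) u \<longrightarrow> \<gamma>1 u \<noteq> c"
  proof (intro allI impI)
    fix u assume "u < n" "cycle_adj n (n-1) u"
    then have "u = n-2 \<or> u = 0" using cadj_iff[OF n3] n3 by auto
    moreover have "\<gamma>1 0 \<in> L 0" using c1 n3 unfolding L_colouring_def by auto
    ultimately show "\<gamma>1 u \<noteq> c" using g1(2) cout by auto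
  qed
  have nn: "n - 1 < n" using n3 by simp
  note U = upd[OF n3 card3 c1 nn cin nb]
  have "rc n L \<gamma> (\<gamma>1(n-1 := c))" using reconf_trans[OF g1(1) U(1)] .
  then show ?thesis using U(2) by (intro exI[of _ "\<gamma>1(n-1 := c)"]) auto
qed

lemma core:
  assumes "col n L \<alpha>" "col n L \<beta>" "\<not> frozen {0..<n} (cycle_adj n) L \<alpha>"
    "\<not> frozen {0..<n} (cycle_adj n) L \<beta>"
  shows "rc n L \<alpha> \<beta>"
proof -
  obtain \<alpha>2 where a: "rc n L \<alpha> \<alpha>2" "col n L \<alpha>2" "\<alpha>2 (n-1) = c" using to_c assms(1,3) by blast
  obtain \<beta>2 where b: "rc n L \<beta> \<beta>2" "col n L \<beta>2" "\<beta>2 (n-1) = c" using to_c assms(2,4) by blast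
  have nn: "n - 1 \<le> n - 1" by simp
  have ag: "\<forall>i<n. n - 1 \<le> i \<longrightarrow> \<alpha>2 i = \<beta>2 i"
  proof (intro allI impI)
    fix i assume "i < n" "n - 1 \<le> i"
    then have "i = n - 1" by simp
    then show "\<alpha>2 i = \<beta>2 i" using a(3) b(3) by simp
  qed
  have pre: "col n L \<alpha>2 \<and> col n L \<beta>2 \<and> \<beta>2 (n-1) = c \<and> (\<forall>i<n. n - 1 \<le> i \<longrightarrow> \<alpha>2 i = \<beta>2 i)"
    using a b ag by blast
  have "rc n L \<alpha>2 \<beta>2" using pushQ[OF nn] pre by blast
  then show ?thesis using reconf_trans[OF a(1)] reconf_trans reconf_sym[OF b(1)] by metis
qed

end

theorem mainTheorem12:
  fixes n :: nat and L :: "nat \<Rightarrow> 'c set" and \<alpha> \<beta> :: "nat \<Rightarrow> 'c"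
  assumes "n \<ge> 3"
    and "\<forall>v<n. finite (L v) \<and> card (L v) = 3"
    and "L_colouring {0..<n} (cycle_adj n) L \<alpha>"
    and "L_colouring {0..<n} (cycle_adj n) L \<beta>"
    and "\<not> frozen {0..<n} (cycle_adj n) L \<alpha>"
    and "\<not> frozen {0..<n} (cycle_adj n) L \<beta>"
    and "\<exists>u<n. \<exists>v<n. L u \<noteq> L v"
  shows "reconf {0..<n} (cycle_adj n) L \<alpha> \<beta>"
proof -
  let ?V = "{0..<n}" and ?E = "cycle_adj n"
  have n0: "n > 0" using assms(1) by simp
  have "\<exists>i<n. L i \<noteq> L (Suc i mod n)"
  proof (rule ccontr)
    assume "\<not> ?thesis"
    then have h: "\<forall>i<n. L i = L (Suc i mod n)" by blast
    have "\<forall>i<n. L i = L 0"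
    proof (intro allI impI)
      fix i assume "i < n" then show "L i = L 0"
      proof (induction i)
        case 0 show ?case by simp
      next
        case (Suc i)
        have "i < n" using Suc.prems by simp
        then have e1: "L i = L (Suc i mod n)" using h by blast
        have e2: "Suc i mod n = Suc i" using Suc.prems by simp
        have e3: "L i = L 0" using Suc.IH Suc.prems by simp
        show ?case using e1 e2 e3 by metis
      qed
    qed
    then have all: "\<forall>i<n. L i = L 0" .
    obtain u v where uv: "u < n" "v < n" "L u \<noteq> L v" using assms(7) by blast
    have "L u = L 0" "L v = L 0" using all uv by blast+
    then show False using uv(3) by simp
  qed
  then obtain i where i: "i < n" "L i \<noteq> L (Suc i mod n)" by blast
  define j where "j = Suc i mod n"
  have jn: "j < n" "j \<le> n" using n0 j_def by auto
  obtain c where c: "c \<in> L i" "c \<notin> L j"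
  proof -
    have "\<not> L i \<subseteq> L j"
    proof
      assume sub: "L i \<subseteq> L j"
      have "L i = L j" by (rule card_subset_eq[OF _ sub]) (use assms(2) i jn in auto)
      then show False using i j_def by simp
    qed
    then show ?thesis using that by auto
  qed
  define \<sigma> where "\<sigma> = rot n j"
  define \<tau> where "\<tau> = rot n (n - j)"
  note H = rot_hyps[OF n0 jn(2), folded \<sigma>_def \<tau>_def]
  have s0: "\<sigma> 0 = j" unfolding \<sigma>_def rot_def using jn by simp
  have "(n - 1 + Suc i mod n) mod n = (n - 1 + Suc i) mod n" by (rule mod_add_right_eq)
  also have "n - 1 + Suc i = n + i" using n0 by simp
  finally have sn: "\<sigma> (n-1) = i" unfolding \<sigma>_def rot_def j_def using i by simp
  have card': "\<forall>v<n. finite ((L \<circ> \<sigma>) v) \<and> card ((L \<circ> \<sigma>) v) = 3" using assms(2) H(1) by auto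
  have cin: "c \<in> (L \<circ> \<sigma>) (n-1)" using c sn by simp
  have cout: "c \<notin> (L \<circ> \<sigma>) 0" using c s0 by simp
  have colA: "L_colouring ?V ?E (L \<circ> \<sigma>) (\<alpha> \<circ> \<sigma>)" using col_tr[OF assms(3) H(1) H(5)] .
  have colB: "L_colouring ?V ?E (L \<circ> \<sigma>) (\<beta> \<circ> \<sigma>)" using col_tr[OF assms(4) H(1) H(5)] .
  have nfx: "\<not> frozen ?V ?E (L \<circ> \<sigma>) (\<gamma> \<circ> \<sigma>)" if nf: "\<not> frozen ?V ?E L \<gamma>" for \<gamma> :: "nat \<Rightarrow> 'c"
  proof
    assume "frozen ?V ?E (L \<circ> \<sigma>) (\<gamma> \<circ> \<sigma>)"
    from frozen_tr[OF this H(2) H(1) H(4) H(6)]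
    have "frozen ?V ?E (L \<circ> \<sigma> \<circ> \<tau>) (\<gamma> \<circ> \<sigma> \<circ> \<tau>)" .
    then have "frozen ?V ?E L \<gamma>" by (rule frozen_cong) (use H(3) in auto)
    with nf show False by simp
  qed
  have r0: "reconf ?V ?E (L \<circ> \<sigma>) (\<alpha> \<circ> \<sigma>) (\<beta> \<circ> \<sigma>)"
    using core[OF assms(1) card' cin cout colA colB nfx[OF assms(5)] nfx[OF assms(6)]] .
  have r: "reconf ?V ?E (L \<circ> \<sigma> \<circ> \<tau>) (\<alpha> \<circ> \<sigma> \<circ> \<tau>) (\<beta> \<circ> \<sigma> \<circ> \<tau>)"
    using reconf_tr[OF r0 H(2) H(1) H(4) H(3) H(6)] .
  show ?thesis
    by (rule reconf_cong[OF r assms(3)]) (use H(3) n0 in auto)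
qed

end
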